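(* Assume $M$ has genus zero. Then the law of $\omega$ under $\mathbf P$ stochastically dominates the $\mathrm{FK}(q)$ random cluster model on $\mathsf G$ with parameter $p=1-b$ and free boundary conditions (the measure on $\xi\subseteq\mathsf E$ proportional to $q^{k(\xi)}p^{|\xi|}(1-p)^{|\mathsf E\setminus\xi|}$). Analogously, the law of $\omega'$ stochastically dominates the $\mathrm{FK}(q')$ random cluster model on $\mathsf G^*$ with parameter $1-a$.
   Context: $M$ is the sphere or the plane. Let $\mathsf G=(\mathsf V,\mathsf E)$ be a finite connected graph embedded in $M$ with all faces topological discs, and $\mathsf G^*=(\mathsf U,\mathsf E^* )$ its embedded dual ($\mathsf U$ = faces of $\mathsf G$); $e^*$ is the dual edge crossing $e$, $\xi^*=\{e^*:e\in\xi\}$. Fix integers $q,q'\ge1$, finite $Q,Q'\subset\mathbb C$ with $Q=-Q$, $Q'=-Q'$, $|Q|=q$, $|Q'|=q'$, and $a,b\in(0,1]$. For $\sigma:\mathsf V\to Q$, $\eta(\sigma)\subseteq\mathsf E^*$ is the set of $e^*$ whose primal $e$ has endpoints with different $\sigma$-values; for $\sigma':\mathsf U\to Q'$, $\eta(\sigma')\subseteq\mathsf E$ is the set of $e$ whose dual $e^*$ has endpoints with different $\sigma'$-values. $\mathbf P(\sigma,\sigma')\propto a^{|\eta(\sigma')|}b^{|\eta(\sigma)|}$ on $\Sigma=\{(\sigma,\sigma'):\eta(\sigma)^*\cap\eta(\sigma')=\emptyset\}$. Percolation: given $(\sigma,\sigma')$, every edge of $\eta(\sigma')$ and every dual edge of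 $\eta(\sigma)$ is open; for each pair $(e,e^* )$ with $e\notin\eta(\sigma')$, $e^*\notin\eta(\sigma)$, independently: if $a+b\le1$, ($e$ open, $e^*$ closed) w.p. $a$, ($e$ closed, $e^*$ open) w.p. $b$, both open w.p. $1-a-b$; if $a+b\ge1$, ($e$ open, $e^*$ closed) w.p. $1-b$, ($e$ closed, $e^*$ open) w.p. $1-a$, both closed w.p. $a+b-1$. $\omega$, $\omega'$ are the sets of open primal and dual edges. $k(\xi)$ is the number of connected components of $(\mathsf V,\xi)$ (for dual configurations, of $(\mathsf U,\xi)$), isolated vertices included. Stochastic domination is with respect to inclusion of edge sets. *)

theory Defs
  imports Complex_Main "HOL-Library.FuncSet"
begin

text \<open>A map is given by a finite set of darts D, a fixed-point-free involution alpha
  (the two half-edges of an edge) and a permutation rho (rotation around vertices).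
  The faces on the two sides of the edge {d, alpha d} are the faces containing d and alpha d.\<close>

definition orb :: "('d \<Rightarrow> 'd) \<Rightarrow> 'd \<Rightarrow> 'd set" where
  "orb f x = {(f ^^ n) x | n. True}"

definition is_cmap :: "'d set \<Rightarrow> ('d \<Rightarrow> 'd) \<Rightarrow> ('d \<Rightarrow> 'd) \<Rightarrow> bool" where
  "is_cmap D alpha rho \<longleftrightarrow> finite D \<and> bij_betw rho D D \<and>
     (\<forall>d\<in>D. alpha d \<in> D \<and> alpha d \<noteq> d \<and> alpha (alpha d) = d)"

definition cm_verts :: "'d set \<Rightarrow> ('d \<Rightarrow> 'd) \<Rightarrow> 'd set set" where
  "cm_verts D rho = {orb rho d | d. d \<in> D}"

definition cm_edges :: "'d set \<Rightarrow> ('d \<Rightarrow> 'd) \<Rightarrow> 'd set set" where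
  "cm_edges D alpha = {orb alpha d | d. d \<in> D}"

definition cm_faces :: "'d set \<Rightarrow> ('d \<Rightarrow> 'd) \<Rightarrow> ('d \<Rightarrow> 'd) \<Rightarrow> 'd set set" where
  "cm_faces D alpha rho = {orb (rho \<circ> alpha) d | d. d \<in> D}"

definition cm_ends :: "('d \<Rightarrow> 'd) \<Rightarrow> 'd set \<Rightarrow> 'd set set" where
  "cm_ends rho e = {orb rho d | d. d \<in> e}"

definition cm_dends :: "('d \<Rightarrow> 'd) \<Rightarrow> ('d \<Rightarrow> 'd) \<Rightarrow> 'd set \<Rightarrow> 'd set set" where
  "cm_dends alpha rho e = {orb (rho \<circ> alpha) d | d. d \<in> e}"

definition cm_connected :: "'d set \<Rightarrow> ('d \<Rightarrow> 'd) \<Rightarrow> ('d \<Rightarrow> 'd) \<Rightarrow> bool" where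
  "cm_connected D alpha rho \<longleftrightarrow>
     (\<forall>d\<in>D. \<forall>d'\<in>D. (d, d') \<in> ({(x, rho x) | x. x \<in> D} \<union> {(x, alpha x) | x. x \<in> D})\<^sup>*)"

definition cm_genus0 :: "'d set \<Rightarrow> ('d \<Rightarrow> 'd) \<Rightarrow> ('d \<Rightarrow> 'd) \<Rightarrow> bool" where
  "cm_genus0 D alpha rho \<longleftrightarrow> is_cmap D alpha rho \<and> cm_connected D alpha rho \<and>
     int (card (cm_verts D rho)) - int (card (cm_edges D alpha)) + int (card (cm_faces D alpha rho)) = 2"

definition n_comps :: "'v set \<Rightarrow> ('e \<Rightarrow> 'v set) \<Rightarrow> 'e set \<Rightarrow> nat" where
  "n_comps Vs ends xi =
     card (Vs // (({(x, y). \<exists>e\<in>xi. x \<in> ends e \<and> y \<in> ends e})\<^sup>* \<inter> (Vs \<times> Vs)))"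

definition fk_weight :: "'v set \<Rightarrow> 'e set \<Rightarrow> ('e \<Rightarrow> 'v set) \<Rightarrow> real \<Rightarrow> real \<Rightarrow> 'e set \<Rightarrow> real" where
  "fk_weight Vs E ends q p xi = q ^ n_comps Vs ends xi * p ^ card xi * (1 - p) ^ card (E - xi)"

definition fk :: "'v set \<Rightarrow> 'e set \<Rightarrow> ('e \<Rightarrow> 'v set) \<Rightarrow> real \<Rightarrow> real \<Rightarrow> 'e set \<Rightarrow> real" where
  "fk Vs E ends q p xi =
     fk_weight Vs E ends q p xi / (\<Sum>z\<in>Pow E. fk_weight Vs E ends q p z)"

definition stoch_dom :: "'e set \<Rightarrow> ('e set \<Rightarrow> real) \<Rightarrow> ('e set \<Rightarrow> real) \<Rightarrow> bool" where
  "stoch_dom E mu nu \<longleftrightarrow>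
     (\<forall>A. A \<subseteq> Pow E \<longrightarrow> (\<forall>x\<in>A. \<forall>y. x \<subseteq> y \<and> y \<subseteq> E \<longrightarrow> y \<in> A) \<longrightarrow>
          (\<Sum>x\<in>A. nu x) \<le> (\<Sum>x\<in>A. mu x))"

text \<open>Dual edges are identified with primal edges (e* ~ e). eta_p s = {e. e* \<in> eta(sigma)},
  eta_d s' = eta(sigma').\<close>
definition eta_p :: "'d set \<Rightarrow> ('d \<Rightarrow> 'd) \<Rightarrow> ('d \<Rightarrow> 'd) \<Rightarrow> ('d set \<Rightarrow> complex) \<Rightarrow> 'd set set" where
  "eta_p D alpha rho s = {e \<in> cm_edges D alpha. \<exists>x\<in>cm_ends rho e. \<exists>y\<in>cm_ends rho e. s x \<noteq> s y}"

definition eta_d :: "'d set \<Rightarrow> ('d \<Rightarrow> 'd) \<Rightarrow> ('d \<Rightarrow> 'd) \<Rightarrow> ('d set \<Rightarrow> complex) \<Rightarrow> 'd set set" where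
  "eta_d D alpha rho s' = {e \<in> cm_edges D alpha. \<exists>x\<in>cm_dends alpha rho e. \<exists>y\<in>cm_dends alpha rho e. s' x \<noteq> s' y}"

definition spin_pairs :: "'d set \<Rightarrow> ('d \<Rightarrow> 'd) \<Rightarrow> ('d \<Rightarrow> 'd) \<Rightarrow> complex set \<Rightarrow> complex set
    \<Rightarrow> (('d set \<Rightarrow> complex) \<times> ('d set \<Rightarrow> complex)) set" where
  "spin_pairs D alpha rho Q Q' =
     {(s, s'). s \<in> cm_verts D rho \<rightarrow>\<^sub>E Q \<and> s' \<in> cm_faces D alpha rho \<rightarrow>\<^sub>E Q' \<and>
               eta_p D alpha rho s \<inter> eta_d D alpha rho s' = {}}"

definition spin_weight :: "'d set \<Rightarrow> ('d \<Rightarrow> 'd) \<Rightarrow> ('d \<Rightarrow> 'd) \<Rightarrow> real \<Rightarrow> real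
    \<Rightarrow> ('d set \<Rightarrow> complex) \<Rightarrow> ('d set \<Rightarrow> complex) \<Rightarrow> real" where
  "spin_weight D alpha rho a b s s' =
     a ^ card (eta_d D alpha rho s') * b ^ card (eta_p D alpha rho s)"

text \<open>Conditional probability that (e open = o, e* open = o') given the spins.
  Forced pairs: e \<in> eta(sigma') gives e open, e* closed; e* \<in> eta(sigma) gives e* open, e closed.\<close>
definition edge_prob :: "real \<Rightarrow> real \<Rightarrow> 'd set set \<Rightarrow> 'd set set \<Rightarrow> 'd set \<Rightarrow> bool \<Rightarrow> bool \<Rightarrow> real" where
  "edge_prob a b etp etd e cp cd =
     (if e \<in> etd then (if cp \<and> \<not> cd then 1 else 0)
      else if e \<in> etp then (if \<not> cp \<and> cd then 1 else 0)
      else if a + b \<le> 1 then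
        (if cp \<and> \<not> cd then a else if \<not> cp \<and> cd then b else if cp \<and> cd then 1 - a - b else 0)
      else
        (if cp \<and> \<not> cd then 1 - b else if \<not> cp \<and> cd then 1 - a else if cp \<and> cd then 0 else a + b - 1))"

text \<open>Joint law of (omega, omega'); omega' is represented as the set of primal edges e with e* open.\<close>
definition perc_law :: "'d set \<Rightarrow> ('d \<Rightarrow> 'd) \<Rightarrow> ('d \<Rightarrow> 'd) \<Rightarrow> complex set \<Rightarrow> complex set
    \<Rightarrow> real \<Rightarrow> real \<Rightarrow> 'd set set \<Rightarrow> 'd set set \<Rightarrow> real" where
  "perc_law D alpha rho Q Q' a b w w' =
     (\<Sum>(s, s')\<in>spin_pairs D alpha rho Q Q'.
        spin_weight D alpha rho a b s s' *
        (\<Prod>e\<in>cm_edges D alpha.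
           edge_prob a b (eta_p D alpha rho s) (eta_d D alpha rho s') e (e \<in> w) (e \<in> w')))
     / (\<Sum>(s, s')\<in>spin_pairs D alpha rho Q Q'. spin_weight D alpha rho a b s s')"

definition omega_law where
  "omega_law D alpha rho Q Q' a b w = (\<Sum>w'\<in>Pow (cm_edges D alpha). perc_law D alpha rho Q Q' a b w w')"

definition omega'_law where
  "omega'_law D alpha rho Q Q' a b w' = (\<Sum>w\<in>Pow (cm_edges D alpha). perc_law D alpha rho Q Q' a b w w')"

end

theory Submission
  imports Defs
begin
lemma sum_Pow_insert:
  assumes "finite F" "e \<notin> F"
  shows "(\<Sum>x\<in>Pow (insert e F). f x) = (\<Sum>x\<in>Pow F. f x + f (insert e x))"
proof -
  have inj: "inj_on (insert e) (Pow F)"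
    unfolding inj_on_def using assms(2) by (metis PowD insert_ident subset_iff)
  have "(\<Sum>x\<in>Pow (insert e F). f x) = (\<Sum>x\<in>Pow F. f x) + (\<Sum>x\<in>insert e ` Pow F. f x)"
    unfolding Pow_insert by (rule sum.union_disjoint) (use assms in auto)
  also have "(\<Sum>x\<in>insert e ` Pow F. f x) = (\<Sum>x\<in>Pow F. f (insert e x))"
    by (rule sum.reindex_cong[OF inj]) auto
  finally show ?thesis by (simp add: sum.distrib)
qed

lemma sum_Pow_prod:
  fixes g :: "'a \<Rightarrow> bool \<Rightarrow> real"
  assumes "finite E"
  shows "(\<Sum>w\<in>Pow E. \<Prod>e\<in>E. g e (e \<in> w)) = (\<Prod>e\<in>E. g e True + g e False)"
  using assms
proof (induction E rule: finite_induct)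
  case empty
  then show ?case by simp
next
  case (insert x F)
  have "(\<Sum>w\<in>Pow (insert x F). \<Prod>e\<in>insert x F. g e (e \<in> w))
     = (\<Sum>w\<in>Pow F. (\<Prod>e\<in>insert x F. g e (e \<in> w)) + (\<Prod>e\<in>insert x F. g e (e \<in> insert x w)))"
    by (rule sum_Pow_insert) (use insert in auto)
  also have "\<dots> = (\<Sum>w\<in>Pow F. (g x False + g x True) * (\<Prod>e\<in>F. g e (e \<in> w)))"
  proof (rule sum.cong[OF refl])
    fix w assume w: "w \<in> Pow F"
    have 1: "(\<Prod>e\<in>insert x F. g e (e \<in> w)) = g x False * (\<Prod>e\<in>F. g e (e \<in> w))"
    proof -
      have "x \<notin> w" using insert w by auto
      then show ?thesis using insert by simp
    qed
    have 2: "(\<Prod>e\<in>insert x F. g e (e \<in> insert x w)) = g x True * (\<Prod>e\<in>F. g e (e \<in> w))"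
    proof -
      have "(\<Prod>e\<in>F. g e (e \<in> insert x w)) = (\<Prod>e\<in>F. g e (e \<in> w))"
        proof (rule prod.cong[OF refl])
          fix e assume "e \<in> F" then have "e \<noteq> x" using insert by auto
          then show "g e (e \<in> insert x w) = g e (e \<in> w)" by simp
        qed
      then show ?thesis using insert by simp
    qed
    show "(\<Prod>e\<in>insert x F. g e (e \<in> w)) + (\<Prod>e\<in>insert x F. g e (e \<in> insert x w)) =
         (g x False + g x True) * (\<Prod>e\<in>F. g e (e \<in> w))"
      unfolding 1 2 by (simp add: algebra_simps)
  qed
  also have "\<dots> = (g x True + g x False) * (\<Prod>e\<in>F. g e True + g e False)"
    by (simp add: sum_distrib_left[symmetric] insert.IH add.commute)
  finally show ?case using insert by simp
qed

lemma two_by_two: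
  fixes a0 a1 b0 b1 c0 c1 d0 d1 :: real
  assumes nn: "0 \<le> a0" "0 \<le> a1" "0 \<le> b0" "0 \<le> b1" "0 \<le> c0" "0 \<le> c1" "0 \<le> d0" "0 \<le> d1"
    and h: "a0 * b0 \<le> c0 * d0" "a0 * b1 \<le> c1 * d0" "a1 * b0 \<le> c1 * d0" "a1 * b1 \<le> c1 * d1"
  shows "(a0 + a1) * (b0 + b1) \<le> (c0 + c1) * (d0 + d1)"
proof (cases "c1 * d0 = 0")
  case True
  then have z: "a0 * b1 = 0" "a1 * b0 = 0" using h nn
    by (metis antisym mult_nonneg_nonneg)+
  show ?thesis
  proof (cases "c1 = 0")
    case True
    then have "a1 * b1 = 0" using h nn by (metis antisym mult_nonneg_nonneg mult_zero_left)
    then show ?thesis using z h nn True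
      by (simp add: algebra_simps) (smt (verit) mult_nonneg_nonneg)
  next
    case False
    then have "d0 = 0" using True by simp
    then have "a0 * b0 = 0" using h nn by (metis antisym mult_nonneg_nonneg mult_zero_right)
    then show ?thesis using z h nn \<open>d0 = 0\<close>
      by (simp add: algebra_simps) (smt (verit) mult_nonneg_nonneg)
  qed
next
  case False
  define m where "m = c1 * d0"
  have mpos: "m > 0" using False nn m_def by (simp add: less_le)
  define u where "u = a0 * b1"
  define v where "v = a1 * b0"
  have "(c0 * d0) * (c1 * d1) \<ge> (a0 * b0) * (a1 * b1)"
    by (rule mult_mono) (use h nn in auto)
  then have k1: "(c0 * d1) * m \<ge> u * v" unfolding m_def u_def v_def by (simp add: algebra_simps)
  have k2: "(m - u) * (m - v) \<ge> 0" using h unfolding m_def u_def v_def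
    by (intro mult_nonneg_nonneg) auto
  have "(c0 * d1 + m - u - v) * m \<ge> 0" using k1 k2 by (simp add: algebra_simps)
  then have "c0 * d1 + m - u - v \<ge> 0" using mpos by (simp add: zero_le_mult_iff)
  then show ?thesis using h unfolding m_def u_def v_def by (simp add: algebra_simps)
qed

lemma four_functions:
  fixes \<alpha> \<beta> \<gamma> \<delta> :: "'a set \<Rightarrow> real"
  assumes "finite E"
    and "\<And>x. x \<subseteq> E \<Longrightarrow> 0 \<le> \<alpha> x" "\<And>x. x \<subseteq> E \<Longrightarrow> 0 \<le> \<beta> x"
    and "\<And>x. x \<subseteq> E \<Longrightarrow> 0 \<le> \<gamma> x" "\<And>x. x \<subseteq> E \<Longrightarrow> 0 \<le> \<delta> x"
    and "\<And>x y. x \<subseteq> E \<Longrightarrow> y \<subseteq> E \<Longrightarrow> \<alpha> x * \<beta> y \<le> \<gamma> (x \<union> y) * \<delta> (x \<inter> y)"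
  shows "(\<Sum>x\<in>Pow E. \<alpha> x) * (\<Sum>x\<in>Pow E. \<beta> x) \<le> (\<Sum>x\<in>Pow E. \<gamma> x) * (\<Sum>x\<in>Pow E. \<delta> x)"
  using assms
proof (induction E arbitrary: \<alpha> \<beta> \<gamma> \<delta> rule: finite_induct)
  case empty
  then show ?case by simp
next
  case (insert e F)
  define \<alpha>' where "\<alpha>' x = \<alpha> x + \<alpha> (insert e x)" for x
  define \<beta>' where "\<beta>' x = \<beta> x + \<beta> (insert e x)" for x
  define \<gamma>' where "\<gamma>' x = \<gamma> x + \<gamma> (insert e x)" for x
  define \<delta>' where "\<delta>' x = \<delta> x + \<delta> (insert e x)" for x
  have s: "(\<Sum>x\<in>Pow (insert e F). f x) = (\<Sum>x\<in>Pow F. f x + f (insert e x))" for f :: "'a set \<Rightarrow> real"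
    by (rule sum_Pow_insert) (use insert in auto)
  have sub: "x \<subseteq> F \<Longrightarrow> x \<subseteq> insert e F" "x \<subseteq> F \<Longrightarrow> insert e x \<subseteq> insert e F" for x by auto
  have "(\<Sum>x\<in>Pow F. \<alpha>' x) * (\<Sum>x\<in>Pow F. \<beta>' x) \<le> (\<Sum>x\<in>Pow F. \<gamma>' x) * (\<Sum>x\<in>Pow F. \<delta>' x)"
  proof (rule insert.IH)
    show "0 \<le> \<alpha>' x" if "x \<subseteq> F" for x using insert.prems(1) sub[OF that] unfolding \<alpha>'_def by (simp add: add_nonneg_nonneg)
    show "0 \<le> \<beta>' x" if "x \<subseteq> F" for x using insert.prems(2) sub[OF that] unfolding \<beta>'_def by (simp add: add_nonneg_nonneg)
    show "0 \<le> \<gamma>' x" if "x \<subseteq> F" for x using insert.prems(3) sub[OF that] unfolding \<gamma>'_def by (simp add: add_nonneg_nonneg)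
    show "0 \<le> \<delta>' x" if "x \<subseteq> F" for x using insert.prems(4) sub[OF that] unfolding \<delta>'_def by (simp add: add_nonneg_nonneg)
    fix x y assume x: "x \<subseteq> F" and y: "y \<subseteq> F"
    have ex: "e \<notin> x" "e \<notin> y" using x y insert.hyps by auto
    have h1: "\<alpha> x * \<beta> y \<le> \<gamma> (x \<union> y) * \<delta> (x \<inter> y)"
      using insert.prems(5)[of x y] x y by auto
    have h2: "\<alpha> x * \<beta> (insert e y) \<le> \<gamma> (insert e (x \<union> y)) * \<delta> (x \<inter> y)"
      using insert.prems(5)[of x "insert e y"] x y ex by auto
    have h3: "\<alpha> (insert e x) * \<beta> y \<le> \<gamma> (insert e (x \<union> y)) * \<delta> (x \<inter> y)"
      using insert.prems(5)[of "insert e x" y] x y ex by auto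
    have h4: "\<alpha> (insert e x) * \<beta> (insert e y) \<le> \<gamma> (insert e (x \<union> y)) * \<delta> (insert e (x \<inter> y))"
      using insert.prems(5)[of "insert e x" "insert e y"] x y ex by auto
    have xu: "x \<union> y \<subseteq> F" "x \<inter> y \<subseteq> F" using x y by auto
    show "\<alpha>' x * \<beta>' y \<le> \<gamma>' (x \<union> y) * \<delta>' (x \<inter> y)"
      unfolding \<alpha>'_def \<beta>'_def \<gamma>'_def \<delta>'_def
      by (rule two_by_two[OF _ _ _ _ _ _ _ _ h1 h2 h3 h4])
         (use insert.prems(1-4) sub[OF x] sub[OF y] sub[OF xu(1)] sub[OF xu(2)] in auto)
  qed
  then show ?case unfolding s \<alpha>'_def \<beta>'_def \<gamma>'_def \<delta>'_def .
qed

definition crel :: "('e \<Rightarrow> 'v set) \<Rightarrow> 'e set \<Rightarrow> ('v \<times> 'v) set" where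
  "crel en xi = {(x, y). \<exists>e\<in>xi. x \<in> en e \<and> y \<in> en e}"

definition cR :: "'v set \<Rightarrow> ('e \<Rightarrow> 'v set) \<Rightarrow> 'e set \<Rightarrow> ('v \<times> 'v) set" where
  "cR V en xi = (crel en xi)\<^sup>* \<inter> (V \<times> V)"

lemma n_comps_cR: "n_comps V en xi = card (V // cR V en xi)"
  unfolding n_comps_def cR_def crel_def ..

lemma sym_crel: "sym (crel en xi)"
  unfolding crel_def sym_def by auto

lemma equiv_cR: "equiv V (cR V en xi)"
proof (rule equivI)
  show "cR V en xi \<subseteq> V \<times> V" unfolding cR_def by auto
  show "refl_on V (cR V en xi)" unfolding cR_def refl_on_def by auto
  show "sym (cR V en xi)" unfolding cR_def
    using sym_rtrancl[OF sym_crel[of en xi]] unfolding sym_def by blast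
  show "trans (cR V en xi)" unfolding cR_def trans_def
    by (blast intro: rtrancl_trans)
qed

lemma crel_const:
  assumes "(u, v) \<in> (crel en xi)\<^sup>*" and "\<forall>e\<in>xi. \<forall>x\<in>en e. \<forall>y\<in>en e. s x = s y"
  shows "s u = s v"
  using assms(1)
proof (induction rule: rtrancl_induct)
  case base then show ?case by simp
next
  case (step y z)
  then show ?case using assms(2) unfolding crel_def by auto
qed

lemma count_colorings:
  assumes V: "finite V" and Q: "finite Q" and en: "\<forall>e\<in>xi. en e \<subseteq> V"
  shows "card {s \<in> V \<rightarrow>\<^sub>E Q. \<forall>e\<in>xi. \<forall>x\<in>en e. \<forall>y\<in>en e. s x = s y} = card Q ^ n_comps V en xi"
proof -
  let ?R = "cR V en xi"
  have eq: "equiv V ?R" by (rule equiv_cR)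
  define \<phi> where "\<phi> f = (\<lambda>v\<in>V. f (?R `` {v}))" for f :: "'a set \<Rightarrow> 'b"
  have inj: "inj_on \<phi> (V // ?R \<rightarrow>\<^sub>E Q)"
  proof (rule inj_onI)
    fix f g assume f: "f \<in> V // ?R \<rightarrow>\<^sub>E Q" and g: "g \<in> V // ?R \<rightarrow>\<^sub>E Q" and fg: "\<phi> f = \<phi> g"
    show "f = g"
    proof (rule extensionalityI[of f "V // ?R" g])
      show "f \<in> extensional (V // ?R)" using f by (simp add: PiE_iff)
      show "g \<in> extensional (V // ?R)" using g by (simp add: PiE_iff)
      fix C assume "C \<in> V // ?R"
      then obtain v where v: "v \<in> V" "C = ?R `` {v}" unfolding quotient_def by blast
      have "\<phi> f v = \<phi> g v" using fg by simp
      then show "f C = g C" using v unfolding \<phi>_def by simp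
    qed
  qed
  have img: "\<phi> ` (V // ?R \<rightarrow>\<^sub>E Q) = {s \<in> V \<rightarrow>\<^sub>E Q. \<forall>e\<in>xi. \<forall>x\<in>en e. \<forall>y\<in>en e. s x = s y}"
  proof (rule set_eqI, rule iffI)
    fix s assume "s \<in> \<phi> ` (V // ?R \<rightarrow>\<^sub>E Q)"
    then obtain f where f: "f \<in> V // ?R \<rightarrow>\<^sub>E Q" "s = \<phi> f" by auto
    have "f (?R `` {v}) \<in> Q" if "v \<in> V" for v using f(1) quotientI[OF that, of ?R] by auto
    then have "s \<in> V \<rightarrow>\<^sub>E Q" using f(2) unfolding \<phi>_def by (simp add: PiE_iff)
    moreover have "s x = s y" if "e \<in> xi" "x \<in> en e" "y \<in> en e" for e x y
    proof -
      have xy: "x \<in> V" "y \<in> V" using en that by auto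
      have "(x, y) \<in> ?R" unfolding cR_def crel_def using that xy by auto
      then have "?R `` {x} = ?R `` {y}" using eq by (simp add: equiv_class_eq)
      then show ?thesis using f xy unfolding \<phi>_def by simp
    qed
    ultimately show "s \<in> {s \<in> V \<rightarrow>\<^sub>E Q. \<forall>e\<in>xi. \<forall>x\<in>en e. \<forall>y\<in>en e. s x = s y}" by blast
  next
    fix s assume s: "s \<in> {s \<in> V \<rightarrow>\<^sub>E Q. \<forall>e\<in>xi. \<forall>x\<in>en e. \<forall>y\<in>en e. s x = s y}"
    define f where "f = (\<lambda>C\<in>V // ?R. s (SOME v. v \<in> C))"
    have fE: "f \<in> V // ?R \<rightarrow>\<^sub>E Q"
    proof -
      have "s (SOME v. v \<in> C) \<in> Q" if CC: "C \<in> V // ?R" for C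
      proof -
        obtain v where v: "v \<in> V" "C = ?R `` {v}" using CC unfolding quotient_def by blast
        have "v \<in> C" using equiv_class_self[OF eq v(1)] v(2) by simp
        then have "\<exists>w. w \<in> C" by blast
        then have "(SOME w. w \<in> C) \<in> C" by (rule someI_ex)
        then have "(SOME w. w \<in> C) \<in> V" using v unfolding cR_def by auto
        then show ?thesis using s by auto
      qed
      then show ?thesis unfolding f_def by (simp add: PiE_iff)
    qed
    have "\<phi> f = s"
    proof (rule extensionalityI[of _ V])
      show "\<phi> f \<in> extensional V" unfolding \<phi>_def by simp
      show "s \<in> extensional V" using s by (auto simp: PiE_def)
      fix v assume v: "v \<in> V"
      have "v \<in> ?R `` {v}" using equiv_class_self[OF eq v] by simp
      then have "\<exists>w. w \<in> ?R `` {v}" by blast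
      then have w: "(SOME w. w \<in> ?R `` {v}) \<in> ?R `` {v}" by (rule someI_ex)
      then have rt: "(v, SOME w. w \<in> ?R `` {v}) \<in> (crel en xi)\<^sup>*" unfolding cR_def by blast
      have sc: "\<forall>e\<in>xi. \<forall>x\<in>en e. \<forall>y\<in>en e. s x = s y" using s by blast
      from crel_const[OF rt sc] have "s v = s (SOME w. w \<in> ?R `` {v})" .
      then show "\<phi> f v = s v" unfolding \<phi>_def f_def using v by (simp add: quotientI)
    qed
    then show "s \<in> \<phi> ` (V // ?R \<rightarrow>\<^sub>E Q)" using fE by blast
  qed
  have fin: "finite (V // ?R)"
    by (rule finite_quotient[OF V]) (auto simp: cR_def)
  have "card {s \<in> V \<rightarrow>\<^sub>E Q. \<forall>e\<in>xi. \<forall>x\<in>en e. \<forall>y\<in>en e. s x = s y} = card (V // ?R \<rightarrow>\<^sub>E Q)"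
    using card_image[OF inj] img by simp
  also have "\<dots> = card Q ^ card (V // ?R)" using fin by (simp add: card_PiE)
  finally show ?thesis by (simp add: n_comps_cR)
qed

lemma cR_mono: "xi \<subseteq> xi' \<Longrightarrow> cR V en xi \<subseteq> cR V en xi'"
  unfolding cR_def crel_def by (intro Int_mono rtrancl_mono) auto

lemma cR_step_char:
  assumes en: "\<forall>e\<in>insert e0 xi. en e \<subseteq> V"
    and uw: "(u, w) \<in> cR V en (insert e0 xi)"
  shows "(u, w) \<in> cR V en xi \<or> ((\<exists>s\<in>en e0. (u, s) \<in> cR V en xi) \<and> (\<exists>t\<in>en e0. (w, t) \<in> cR V en xi))"
proof -
  let ?R = "cR V en xi"
  have eq: "equiv V ?R" by (rule equiv_cR)
  have u: "u \<in> V" and rt: "(u, w) \<in> (crel en (insert e0 xi))\<^sup>*" using uw unfolding cR_def by auto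
  have "(w \<in> V) \<and> ((u, w) \<in> ?R \<or> ((\<exists>s\<in>en e0. (u, s) \<in> ?R) \<and> (\<exists>t\<in>en e0. (w, t) \<in> ?R)))"
    using rt
  proof (induction rule: rtrancl_induct)
    case base
    then show ?case using u equiv_class_self[OF eq u] by simp
  next
    case (step y z)
    from step.hyps(2) obtain e where e: "e \<in> insert e0 xi" "y \<in> en e" "z \<in> en e"
      unfolding crel_def by blast
    have yz: "y \<in> V" "z \<in> V" using e en by auto
    have zz: "(z, z) \<in> ?R" using equiv_class_self[OF eq yz(2)] by simp
    show ?case
    proof (cases "e \<in> xi")
      case True
      then have yzR: "(y, z) \<in> ?R" "(z, y) \<in> ?R" using e yz unfolding cR_def crel_def by blast+
      from step.IH show ?thesis
      proof
        assume "(u, y) \<in> ?R \<or> ((\<exists>s\<in>en e0. (u, s) \<in> ?R) \<and> (\<exists>t\<in>en e0. (y, t) \<in> ?R))"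
        then show ?thesis
        proof
          assume "(u, y) \<in> ?R"
          then have "(u, z) \<in> ?R" using yzR eq by (meson equiv_def transD)
          then show ?thesis using yz by simp
        next
          assume h: "(\<exists>s\<in>en e0. (u, s) \<in> ?R) \<and> (\<exists>t\<in>en e0. (y, t) \<in> ?R)"
          then obtain t where t: "t \<in> en e0" "(y, t) \<in> ?R" by blast
          then have "(z, t) \<in> ?R" using yzR eq by (meson equiv_def transD)
          then show ?thesis using h t yz by blast
        qed
      qed
    next
      case False
      then have e0: "e = e0" using e by simp
      have "\<exists>s\<in>en e0. (u, s) \<in> ?R"
        using step.IH e e0 by blast
      then show ?thesis using zz e e0 yz by blast
    qed
  qed
  then show ?thesis by blast
qed

lemma cR_step_char2:
  assumes en: "\<forall>e\<in>insert e0 xi. en e \<subseteq> V"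
    and h: "(u, w) \<in> cR V en xi \<or> ((\<exists>s\<in>en e0. (u, s) \<in> cR V en xi) \<and> (\<exists>t\<in>en e0. (w, t) \<in> cR V en xi))"
  shows "(u, w) \<in> cR V en (insert e0 xi)"
  using h
proof
  assume "(u, w) \<in> cR V en xi"
  then show ?thesis using cR_mono[of xi "insert e0 xi"] by blast
next
  assume "(\<exists>s\<in>en e0. (u, s) \<in> cR V en xi) \<and> (\<exists>t\<in>en e0. (w, t) \<in> cR V en xi)"
  then obtain s t where st: "s \<in> en e0" "t \<in> en e0" "(u, s) \<in> cR V en xi" "(w, t) \<in> cR V en xi" by blast
  let ?R' = "cR V en (insert e0 xi)"
  have eq': "equiv V ?R'" by (rule equiv_cR)
  have 1: "(u, s) \<in> ?R'" "(w, t) \<in> ?R'" using st cR_mono[of xi "insert e0 xi"] by blast+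
  have 2: "(s, t) \<in> ?R'" using st en unfolding cR_def crel_def by blast
  have "(t, w) \<in> ?R'" using 1 eq' by (meson equiv_def symD)
  then show ?thesis using 1 2 eq' by (meson equiv_def transD)
qed

lemma n_comps_insert:
  assumes V: "finite V" and en: "\<forall>e\<in>insert e0 xi. en e \<subseteq> V" and ne: "en e0 \<noteq> {}"
  shows "n_comps V en (insert e0 xi) + card ((\<lambda>v. cR V en xi `` {v}) ` en e0) = n_comps V en xi + 1"
proof -
  let ?R = "cR V en xi" and ?R' = "cR V en (insert e0 xi)" and ?S = "en e0"
  have eq: "equiv V ?R" by (rule equiv_cR)
  have eq': "equiv V ?R'" by (rule equiv_cR)
  have SV: "?S \<subseteq> V" using en by auto
  define near where "near v \<longleftrightarrow> (\<exists>t\<in>?S. (v, t) \<in> ?R)" for v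
  define C0 where "C0 = {w \<in> V. near w}"
  define M where "M = (\<lambda>v. ?R `` {v}) ` ?S"
  have char: "(u, w) \<in> ?R' \<longleftrightarrow> (u, w) \<in> ?R \<or> (near u \<and> near w)" for u w
    unfolding near_def using cR_step_char[OF en] cR_step_char2[OF en] by blast
  have RV: "(u, w) \<in> ?R \<Longrightarrow> u \<in> V \<and> w \<in> V" for u w unfolding cR_def by auto
  have nearV: "near u \<Longrightarrow> u \<in> V" for u unfolding near_def using RV by blast
  have near_trans: "(v, w) \<in> ?R \<Longrightarrow> near w \<Longrightarrow> near v" for v w
    unfolding near_def using eq by (meson equiv_def transD)
  have near_sym: "(v, w) \<in> ?R \<Longrightarrow> near v \<Longrightarrow> near w" for v w
    using near_trans eq by (meson equiv_def symD)
  have cls: "?R' `` {v} = (if near v then C0 else ?R `` {v})" if v: "v \<in> V" for v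
  proof (cases "near v")
    case True
    have "?R' `` {v} = C0"
    proof (rule set_eqI)
      fix w
      show "w \<in> ?R' `` {v} \<longleftrightarrow> w \<in> C0"
        unfolding C0_def using char[of v w] True near_sym RV nearV by blast
    qed
    then show ?thesis using True by simp
  next
    case False
    have "?R' `` {v} = ?R `` {v}"
    proof (rule set_eqI)
      fix w
      show "w \<in> ?R' `` {v} \<longleftrightarrow> w \<in> ?R `` {v}"
        using char[of v w] False by blast
    qed
    then show ?thesis using False by simp
  qed
  have inM: "?R `` {v} \<in> M \<longleftrightarrow> near v" if v: "v \<in> V" for v
  proof
    assume "?R `` {v} \<in> M"
    then obtain t where t: "t \<in> ?S" "?R `` {v} = ?R `` {t}" unfolding M_def by blast
    then have "(v, t) \<in> ?R" using eq_equiv_class[OF t(2) eq] t(1) SV by blast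
    then show "near v" unfolding near_def using t by blast
  next
    assume "near v"
    then obtain t where t: "t \<in> ?S" "(v, t) \<in> ?R" unfolding near_def by blast
    then have "?R `` {v} = ?R `` {t}" using eq by (simp add: equiv_class_eq)
    then show "?R `` {v} \<in> M" unfolding M_def using t by blast
  qed
  obtain s0 where s0: "s0 \<in> ?S" using ne by blast
  have s0V: "s0 \<in> V" using s0 SV by blast
  have nears0: "near s0" unfolding near_def using s0 equiv_class_self[OF eq s0V] by blast
  have quot: "V // ?R' = insert C0 (V // ?R - M)"
  proof (rule set_eqI)
    fix C
    show "C \<in> V // ?R' \<longleftrightarrow> C \<in> insert C0 (V // ?R - M)"
    proof
      assume "C \<in> V // ?R'"
      then obtain v where v: "v \<in> V" "C = ?R' `` {v}" unfolding quotient_def by blast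
      show "C \<in> insert C0 (V // ?R - M)"
      proof (cases "near v")
        case True then show ?thesis using cls[OF v(1)] v by simp
      next
        case False
        then have "C = ?R `` {v}" using cls[OF v(1)] v by simp
        moreover have "?R `` {v} \<in> V // ?R" using v by (simp add: quotientI)
        ultimately show ?thesis using inM[OF v(1)] False by blast
      qed
    next
      assume "C \<in> insert C0 (V // ?R - M)"
      then show "C \<in> V // ?R'"
      proof
        assume "C = C0"
        then have "C = ?R' `` {s0}" using cls[OF s0V] nears0 by simp
        then show ?thesis using s0V by (simp add: quotientI)
      next
        assume "C \<in> V // ?R - M"
        then obtain v where v: "v \<in> V" "C = ?R `` {v}" "C \<notin> M" unfolding quotient_def by blast
        then have "\<not> near v" using inM by blast
        then have "C = ?R' `` {v}" using cls[OF v(1)] v by simp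
        then show ?thesis using v by (simp add: quotientI)
      qed
    qed
  qed
  have C0nin: "C0 \<notin> V // ?R - M"
  proof
    assume "C0 \<in> V // ?R - M"
    then obtain v where v: "v \<in> V" "C0 = ?R `` {v}" "C0 \<notin> M" unfolding quotient_def by blast
    have "s0 \<in> C0" unfolding C0_def using s0V nears0 by blast
    then have "(v, s0) \<in> ?R" using v by simp
    then have "near v" using near_trans nears0 by blast
    then show False using inM[OF v(1)] v by simp
  qed
  have MR: "M \<subseteq> V // ?R" unfolding M_def using SV by (auto intro: quotientI)
  have fin: "finite (V // ?R)" by (rule finite_quotient[OF V]) (auto simp: cR_def)
  have finM: "finite M" using MR fin by (rule finite_subset)
  have "card (V // ?R') = card (V // ?R - M) + 1"
    unfolding quot using C0nin fin by simp
  moreover have "card (V // ?R - M) = card (V // ?R) - card M"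
    using MR finM by (simp add: card_Diff_subset)
  moreover have "card M \<le> card (V // ?R)" using MR fin by (simp add: card_mono)
  ultimately show ?thesis unfolding n_comps_cR M_def[symmetric] by simp
qed

lemma card_classes_antimono:
  assumes "xi \<subseteq> xi'" "S \<subseteq> V" "finite S"
  shows "card ((\<lambda>v. cR V en xi' `` {v}) ` S) \<le> card ((\<lambda>v. cR V en xi `` {v}) ` S)"
proof -
  let ?R = "cR V en xi" and ?R' = "cR V en xi'"
  have eq: "equiv V ?R" and eq': "equiv V ?R'" by (rule equiv_cR)+
  have sub: "?R \<subseteq> ?R'" using assms(1) by (rule cR_mono)
  have "(\<lambda>v. ?R' `` {v}) ` S = (\<lambda>C. ?R' `` C) ` ((\<lambda>v. ?R `` {v}) ` S)"
  proof -
    have "?R' `` (?R `` {v}) = ?R' `` {v}" if "v \<in> S" for v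
    proof (rule set_eqI, rule iffI)
      fix w assume "w \<in> ?R' `` (?R `` {v})"
      then obtain u where "(v, u) \<in> ?R" "(u, w) \<in> ?R'" by blast
      then show "w \<in> ?R' `` {v}" using sub eq' by (meson equiv_def subsetD transD Image_singleton_iff)
    next
      fix w assume "w \<in> ?R' `` {v}"
      moreover have "(v, v) \<in> ?R" using equiv_class_self[OF eq] that assms(2) by blast
      ultimately show "w \<in> ?R' `` (?R `` {v})" by blast
    qed
    then show ?thesis by (simp add: image_image cong: image_cong)
  qed
  then show ?thesis using assms(3) by (simp add: card_image_le)
qed

lemma n_comps_telescope:
  assumes V: "finite V" and en: "\<forall>e\<in>E. en e \<subseteq> V \<and> en e \<noteq> {}"
    and S: "finite S" "S \<subseteq> E" and z: "z \<subseteq> z'" "z' \<subseteq> E"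
  shows "int (n_comps V en z') - int (n_comps V en (z' \<union> S)) \<le> int (n_comps V en z) - int (n_comps V en (z \<union> S))"
  using S
proof (induction S rule: finite_induct)
  case empty
  then show ?case by simp
next
  case (insert e S)
  have eE: "e \<in> E" using insert by auto
  have en1: "\<forall>f\<in>insert e (z \<union> S). en f \<subseteq> V" using en insert z eE by blast
  have en2: "\<forall>f\<in>insert e (z' \<union> S). en f \<subseteq> V" using en insert z eE by blast
  have ne: "en e \<noteq> {}" using en eE by blast
  note i1 = n_comps_insert[OF V en1 ne]
  note i2 = n_comps_insert[OF V en2 ne]
  have m: "card ((\<lambda>v. cR V en (z' \<union> S) `` {v}) ` en e) \<le> card ((\<lambda>v. cR V en (z \<union> S) `` {v}) ` en e)"
    by (rule card_classes_antimono) (use z en eE V in \<open>auto intro: finite_subset[of _ V]\<close>)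
  have "z \<union> insert e S = insert e (z \<union> S)" "z' \<union> insert e S = insert e (z' \<union> S)" by auto
  then show ?case using insert.IH insert.prems i1 i2 m by simp
qed

lemma n_comps_submod:
  assumes V: "finite V" and en: "\<forall>e\<in>E. en e \<subseteq> V \<and> en e \<noteq> {}" and E: "finite E"
    and xy: "x \<subseteq> E" "y \<subseteq> E"
  shows "n_comps V en x + n_comps V en y \<le> n_comps V en (x \<union> y) + n_comps V en (x \<inter> y)"
proof -
  have "int (n_comps V en y) - int (n_comps V en (y \<union> x)) \<le> int (n_comps V en (x \<inter> y)) - int (n_comps V en ((x \<inter> y) \<union> x))"
    by (rule n_comps_telescope[OF V en]) (use xy E in \<open>auto intro: finite_subset\<close>)
  moreover have "(x \<inter> y) \<union> x = x" "y \<union> x = x \<union> y" by auto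
  ultimately show ?thesis by simp
qed

definition etaG :: "'e set \<Rightarrow> ('e \<Rightarrow> 'v set) \<Rightarrow> ('v \<Rightarrow> 'c) \<Rightarrow> 'e set" where
  "etaG E en s = {e \<in> E. \<exists>x\<in>en e. \<exists>y\<in>en e. s x \<noteq> s y}"

definition mm :: "real \<Rightarrow> 'e set \<Rightarrow> 'e set \<Rightarrow> 'e \<Rightarrow> bool \<Rightarrow> real" where
  "mm b X Y e c = (if e \<in> Y then (if c then 1 else 0) else if e \<in> X then (if c then 0 else 1)
     else if c then 1 - b else b)"

lemma prod_if_const:
  fixes c :: real
  assumes "finite E" "A \<subseteq> E"
  shows "(\<Prod>e\<in>E. if e \<in> A then c else 1) = c ^ card A"
proof -
  have "(\<Prod>e\<in>E. if e \<in> A then c else 1) = (\<Prod>e\<in>E \<inter> {e. e \<in> A}. c) * (\<Prod>e\<in>E \<inter> - {e. e \<in> A}. 1)"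
    using assms(1) by (rule prod.If_cases)
  also have "E \<inter> {e. e \<in> A} = A" using assms(2) by auto
  finally show ?thesis by simp
qed

lemma prod_mm:
  assumes E: "finite E" and XY: "X \<subseteq> E" "Y \<subseteq> E" "X \<inter> Y = {}" and w: "w \<subseteq> E"
  shows "(\<Prod>e\<in>E. mm b X Y e (e \<in> w)) =
     (if Y \<subseteq> w \<and> X \<inter> w = {} then (1 - b) ^ card (w - Y) * b ^ card (E - w - X) else 0)"
proof (cases "Y \<subseteq> w \<and> X \<inter> w = {}")
  case True
  have "(\<Prod>e\<in>E. mm b X Y e (e \<in> w)) =
        (\<Prod>e\<in>E. (if e \<in> w - Y then 1 - b else 1) * (if e \<in> E - w - X then b else 1))"
  proof (rule prod.cong[OF refl])
    fix e assume "e \<in> E"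
    then show "mm b X Y e (e \<in> w) = (if e \<in> w - Y then 1 - b else 1) * (if e \<in> E - w - X then b else 1)"
      using True unfolding mm_def by auto
  qed
  also have "\<dots> = (1 - b) ^ card (w - Y) * b ^ card (E - w - X)"
  proof -
    have s1: "w - Y \<subseteq> E" "E - w - X \<subseteq> E" using w by auto
    show ?thesis unfolding prod.distrib prod_if_const[OF E s1(1)] prod_if_const[OF E s1(2)] ..
  qed
  finally show ?thesis using True by simp
next
  case False
  have "\<exists>e\<in>E. mm b X Y e (e \<in> w) = 0"
  proof (cases "Y \<subseteq> w")
    case False
    then obtain e where "e \<in> Y" "e \<notin> w" by blast
    then show ?thesis using XY unfolding mm_def by auto
  next
    case True
    then have "X \<inter> w \<noteq> {}" using \<open>\<not> (Y \<subseteq> w \<and> X \<inter> w = {})\<close> by blast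
    then obtain e where "e \<in> X" "e \<in> w" by blast
    then show ?thesis using XY unfolding mm_def by auto
  qed
  then have "(\<Prod>e\<in>E. mm b X Y e (e \<in> w)) = 0" using E by (auto simp: prod_zero_iff)
  then show ?thesis using False by (simp only: if_False)
qed

definition Wf :: "'e set \<Rightarrow> 'v set \<Rightarrow> ('e \<Rightarrow> 'v set) \<Rightarrow> 'c set \<Rightarrow> 'u set \<Rightarrow> ('e \<Rightarrow> 'u set) \<Rightarrow> 'k set
   \<Rightarrow> real \<Rightarrow> real \<Rightarrow> 'e set \<Rightarrow> real" where
  "Wf E V1 en1 Q1 V2 en2 Q2 a b w = (\<Sum>s\<in>V1 \<rightarrow>\<^sub>E Q1. \<Sum>t\<in>V2 \<rightarrow>\<^sub>E Q2.
     if etaG E en1 s \<inter> etaG E en2 t = {} then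
       a ^ card (etaG E en2 t) * b ^ card (etaG E en1 s) *
       (\<Prod>e\<in>E. mm b (etaG E en1 s) (etaG E en2 t) e (e \<in> w))
     else 0)"

definition Zf :: "'e set \<Rightarrow> 'v set \<Rightarrow> ('e \<Rightarrow> 'v set) \<Rightarrow> 'c set \<Rightarrow> 'u set \<Rightarrow> ('e \<Rightarrow> 'u set) \<Rightarrow> 'k set
   \<Rightarrow> real \<Rightarrow> real \<Rightarrow> real" where
  "Zf E V1 en1 Q1 V2 en2 Q2 a b = (\<Sum>s\<in>V1 \<rightarrow>\<^sub>E Q1. \<Sum>t\<in>V2 \<rightarrow>\<^sub>E Q2.
     if etaG E en1 s \<inter> etaG E en2 t = {} then
       a ^ card (etaG E en2 t) * b ^ card (etaG E en1 s) else 0)"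

definition Hf :: "'e set \<Rightarrow> 'u set \<Rightarrow> ('e \<Rightarrow> 'u set) \<Rightarrow> 'k set \<Rightarrow> real \<Rightarrow> real \<Rightarrow> 'e set \<Rightarrow> real" where
  "Hf E V2 en2 Q2 a b w = (\<Sum>t\<in>V2 \<rightarrow>\<^sub>E Q2.
     if etaG E en2 t \<subseteq> w then a ^ card (etaG E en2 t) * (1 - b) ^ (card w - card (etaG E en2 t)) else 0)"

lemma etaG_sub: "etaG E en s \<subseteq> E" unfolding etaG_def by auto

lemma term_ident:
  assumes E: "finite E" and w: "w \<subseteq> E" and X: "X \<subseteq> E" and Y: "Y \<subseteq> E"
  shows "(if X \<inter> Y = {} then a ^ card Y * b ^ card X * (\<Prod>e\<in>E. mm b X Y e (e \<in> w)) else 0) =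
    (if X \<inter> w = {} then 1 else 0) *
    ((if Y \<subseteq> w then a ^ card Y * (1 - b) ^ (card w - card Y) else 0) * b ^ card (E - w))"
proof (cases "X \<inter> Y = {}")
  case True
  note p = prod_mm[OF E X Y True w, of b]
  show ?thesis
  proof (cases "Y \<subseteq> w \<and> X \<inter> w = {}")
    case True2: True
    have fw: "finite w" using E w by (rule rev_finite_subset)
    have c1: "card (w - Y) = card w - card Y" using True2 fw by (simp add: card_Diff_subset rev_finite_subset)
    have XE: "X \<subseteq> E - w" using X True2 by blast
    have fEw: "finite (E - w)" using E by simp
    have "card (E - w - X) + card X = card (E - w)"
      using card_Diff_subset[OF rev_finite_subset[OF fEw XE] XE] card_mono[OF fEw XE] by simp
    then have c2: "b ^ card (E - w - X) * b ^ card X = b ^ card (E - w)" by (simp add: power_add[symmetric])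
    show ?thesis unfolding p using True True2 c1 c2
      by (simp add: algebra_simps)
  next
    case False
    then show ?thesis unfolding p using True by auto
  qed
next
  case False
  then have "\<not> (Y \<subseteq> w \<and> X \<inter> w = {})" by blast
  then show ?thesis using False by auto
qed

lemma Wf_factor:
  assumes E: "finite E" and w: "w \<subseteq> E" and fin: "finite V1" "finite Q1"
  shows "Wf E V1 en1 Q1 V2 en2 Q2 a b w =
    b ^ card (E - w) * real (card {s \<in> V1 \<rightarrow>\<^sub>E Q1. etaG E en1 s \<inter> w = {}}) * Hf E V2 en2 Q2 a b w"
proof -
  have "Wf E V1 en1 Q1 V2 en2 Q2 a b w = (\<Sum>s\<in>V1 \<rightarrow>\<^sub>E Q1. \<Sum>t\<in>V2 \<rightarrow>\<^sub>E Q2.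
     (if etaG E en1 s \<inter> w = {} then 1 else 0) *
    ((if etaG E en2 t \<subseteq> w then a ^ card (etaG E en2 t) * (1 - b) ^ (card w - card (etaG E en2 t)) else 0) * b ^ card (E - w)))"
    unfolding Wf_def by (simp only: term_ident[OF E w etaG_sub etaG_sub])
  also have "\<dots> = (\<Sum>s\<in>V1 \<rightarrow>\<^sub>E Q1. (if etaG E en1 s \<inter> w = {} then 1 else 0) * (Hf E V2 en2 Q2 a b w * b ^ card (E - w)))"
    unfolding Hf_def by (simp add: sum_distrib_left sum_distrib_right)
  also have "\<dots> = (\<Sum>s\<in>V1 \<rightarrow>\<^sub>E Q1. (if etaG E en1 s \<inter> w = {} then 1 else 0)) * Hf E V2 en2 Q2 a b w * b ^ card (E - w)"
    by (simp add: sum_distrib_right mult.assoc)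
  also have "(\<Sum>s\<in>V1 \<rightarrow>\<^sub>E Q1. (if etaG E en1 s \<inter> w = {} then 1 else 0 :: real)) = real (card {s \<in> V1 \<rightarrow>\<^sub>E Q1. etaG E en1 s \<inter> w = {}})"
    using fin by (simp add: sum.inter_filter[symmetric] finite_PiE)
  finally show ?thesis by (simp add: algebra_simps)
qed

lemma card_good_spins:
  assumes w: "w \<subseteq> E" and fin: "finite V1" "finite Q1" and en: "\<forall>e\<in>E. en1 e \<subseteq> V1"
  shows "card {s \<in> V1 \<rightarrow>\<^sub>E Q1. etaG E en1 s \<inter> w = {}} = card Q1 ^ n_comps V1 en1 w"
proof -
  have "{s \<in> V1 \<rightarrow>\<^sub>E Q1. etaG E en1 s \<inter> w = {}} = {s \<in> V1 \<rightarrow>\<^sub>E Q1. \<forall>e\<in>w. \<forall>x\<in>en1 e. \<forall>y\<in>en1 e. s x = s y}"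
    using w unfolding etaG_def by blast
  also have "card \<dots> = card Q1 ^ n_comps V1 en1 w"
    by (rule count_colorings) (use fin en w in auto)
  finally show ?thesis .
qed

lemma Hf_mono:
  assumes E: "finite E" and yz: "y \<subseteq> z" "z \<subseteq> E" and b: "b \<le> 1" and a: "0 \<le> a"
  shows "(1 - b) ^ (card z - card y) * Hf E V2 en2 Q2 a b y \<le> Hf E V2 en2 Q2 a b z"
  unfolding Hf_def sum_distrib_left
proof (rule sum_mono)
  fix t
  let ?Y = "etaG E en2 t"
  have fz: "finite z" using E yz(2) by (rule rev_finite_subset)
  have fy: "finite y" using fz yz(1) by (rule rev_finite_subset)
  show "(1 - b) ^ (card z - card y) * (if ?Y \<subseteq> y then a ^ card ?Y * (1 - b) ^ (card y - card ?Y) else 0)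
        \<le> (if ?Y \<subseteq> z then a ^ card ?Y * (1 - b) ^ (card z - card ?Y) else 0)"
  proof (cases "?Y \<subseteq> y")
    case True
    have c1: "card ?Y \<le> card y" using True fy by (rule card_mono[rotated])
    have c2: "card y \<le> card z" using yz(1) fz by (rule card_mono[rotated])
    have "card z - card y + (card y - card ?Y) = card z - card ?Y" using c1 c2 by simp
    then have "(1 - b) ^ (card z - card y) * (1 - b) ^ (card y - card ?Y) = (1 - b) ^ (card z - card ?Y)"
      by (simp add: power_add[symmetric])
    then show ?thesis using True yz by (simp add: algebra_simps)
  next
    case False
    then show ?thesis using a b by auto
  qed
qed

lemma mm_sum: "mm b X Y e True + mm b X Y e False = 1"
  unfolding mm_def by simp

lemma sum_Wf:
  assumes E: "finite E"
  shows "(\<Sum>w\<in>Pow E. Wf E V1 en1 Q1 V2 en2 Q2 a b w) = Zf E V1 en1 Q1 V2 en2 Q2 a b"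
proof -
  have "(\<Sum>w\<in>Pow E. Wf E V1 en1 Q1 V2 en2 Q2 a b w) = (\<Sum>s\<in>V1 \<rightarrow>\<^sub>E Q1. \<Sum>t\<in>V2 \<rightarrow>\<^sub>E Q2. \<Sum>w\<in>Pow E.
     if etaG E en1 s \<inter> etaG E en2 t = {} then
       a ^ card (etaG E en2 t) * b ^ card (etaG E en1 s) *
       (\<Prod>e\<in>E. mm b (etaG E en1 s) (etaG E en2 t) e (e \<in> w))
     else 0)"
    unfolding Wf_def by (subst sum.swap) (simp only: sum.swap[of _ "Pow E"])
  also have "\<dots> = Zf E V1 en1 Q1 V2 en2 Q2 a b"
    unfolding Zf_def
  proof (intro sum.cong refl)
    fix s t
    let ?X = "etaG E en1 s" and ?Y = "etaG E en2 t"
    have "(\<Sum>w\<in>Pow E. \<Prod>e\<in>E. mm b ?X ?Y e (e \<in> w)) = 1"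
      using sum_Pow_prod[OF E, of "mm b ?X ?Y"] by (simp add: mm_sum)
    then show "(\<Sum>w\<in>Pow E. if ?X \<inter> ?Y = {} then a ^ card ?Y * b ^ card ?X * (\<Prod>e\<in>E. mm b ?X ?Y e (e \<in> w)) else 0)
      = (if ?X \<inter> ?Y = {} then a ^ card ?Y * b ^ card ?X else 0)"
      by (simp add: sum_distrib_left[symmetric])
  qed
  finally show ?thesis .
qed

lemma Zf_pos:
  fixes Q1 :: "'c set" and Q2 :: "'k set" and en1 :: "'e \<Rightarrow> 'v set" and en2 :: "'e \<Rightarrow> 'u set"
  assumes fin: "finite V1" "finite Q1" "finite V2" "finite Q2" and ne: "Q1 \<noteq> {}" "Q2 \<noteq> {}"
    and en: "\<forall>e\<in>E. en1 e \<subseteq> V1" "\<forall>e\<in>E. en2 e \<subseteq> V2" and ab: "0 \<le> a" "0 \<le> b"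
  shows "Zf E V1 en1 Q1 V2 en2 Q2 a b > 0"
proof -
  obtain q1 where q1: "q1 \<in> Q1" using ne by blast
  obtain q2 where q2: "q2 \<in> Q2" using ne by blast
  define s0 where "s0 = (\<lambda>v\<in>V1. q1)"
  define t0 where "t0 = (\<lambda>v\<in>V2. q2)"
  have s0: "s0 \<in> V1 \<rightarrow>\<^sub>E Q1" unfolding s0_def using q1 by simp
  have t0: "t0 \<in> V2 \<rightarrow>\<^sub>E Q2" unfolding t0_def using q2 by simp
  have e1: "etaG E en1 s0 = {}" unfolding etaG_def s0_def using en(1) by (auto simp: subset_iff)
  have e2: "etaG E en2 t0 = {}" unfolding etaG_def t0_def using en(2) by (auto simp: subset_iff)
  define F where "F (s::'v \<Rightarrow> 'c) (t::'u \<Rightarrow> 'k) = (if etaG E en1 s \<inter> etaG E en2 t = {} then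
       a ^ card (etaG E en2 t) * b ^ card (etaG E en1 s) else 0)" for s t
  have Fnn: "F s t \<ge> 0" for s t unfolding F_def using ab by simp
  have F0: "F s0 t0 = 1" unfolding F_def e1 e2 by simp
  have "F s0 t0 \<le> (\<Sum>t\<in>V2 \<rightarrow>\<^sub>E Q2. F s0 t)"
    by (rule member_le_sum) (use t0 fin Fnn in \<open>auto simp: finite_PiE\<close>)
  also have "\<dots> \<le> (\<Sum>s\<in>V1 \<rightarrow>\<^sub>E Q1. \<Sum>t\<in>V2 \<rightarrow>\<^sub>E Q2. F s t)"
    by (rule member_le_sum[where f = "\<lambda>s. \<Sum>t\<in>V2 \<rightarrow>\<^sub>E Q2. F s t"]) (use s0 fin Fnn in \<open>auto simp: finite_PiE intro: sum_nonneg\<close>)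
  finally show ?thesis unfolding Zf_def F_def[symmetric] using F0 by simp
qed

lemma abstract_dom:
  assumes E: "finite E" and fin: "finite V1" "finite Q1" "finite V2" "finite Q2"
    and ne: "Q1 \<noteq> {}" "Q2 \<noteq> {}"
    and en1: "\<forall>e\<in>E. en1 e \<subseteq> V1 \<and> en1 e \<noteq> {}" and en2: "\<forall>e\<in>E. en2 e \<subseteq> V2"
    and a: "0 < a" and b: "0 < b" "b \<le> 1"
  shows "stoch_dom E (\<lambda>w. Wf E V1 en1 Q1 V2 en2 Q2 a b w / Zf E V1 en1 Q1 V2 en2 Q2 a b)
           (fk V1 E en1 (real (card Q1)) (1 - b))"
  unfolding stoch_dom_def
proof (intro allI impI)
  fix A assume A: "A \<subseteq> Pow E" and up: "\<forall>x\<in>A. \<forall>y. x \<subseteq> y \<and> y \<subseteq> E \<longrightarrow> y \<in> A"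
  let ?q = "real (card Q1)"
  define k where "k z = n_comps V1 en1 z" for z
  define W where "W z = Wf E V1 en1 Q1 V2 en2 Q2 a b z" for z
  define H where "H z = Hf E V2 en2 Q2 a b z" for z
  define Z where "Z = Zf E V1 en1 Q1 V2 en2 Q2 a b"
  define \<nu> where "\<nu> z = fk_weight V1 E en1 ?q (1 - b) z" for z
  define Z\<nu> where "Z\<nu> = (\<Sum>z\<in>Pow E. \<nu> z)"
  have q1: "?q \<ge> 1" using ne fin by (simp add: Suc_le_eq card_gt_0_iff)
  have \<nu>_eq: "\<nu> z = ?q ^ k z * (1 - b) ^ card z * b ^ card (E - z)" for z
    unfolding \<nu>_def fk_weight_def k_def by simp
  have H_nn: "H z \<ge> 0" for z unfolding H_def Hf_def using a b by (intro sum_nonneg) auto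
  have W_eq: "W z = b ^ card (E - z) * ?q ^ k z * H z" if "z \<subseteq> E" for z
  proof -
    have "W z = b ^ card (E - z) * real (card {s \<in> V1 \<rightarrow>\<^sub>E Q1. etaG E en1 s \<inter> z = {}}) * H z"
      unfolding W_def H_def by (rule Wf_factor[OF E that fin(1,2)])
    also have "card {s \<in> V1 \<rightarrow>\<^sub>E Q1. etaG E en1 s \<inter> z = {}} = card Q1 ^ k z"
      unfolding k_def by (rule card_good_spins[OF that fin(1,2)]) (use en1 in blast)
    finally show ?thesis by simp
  qed
  have \<nu>_nn: "\<nu> z \<ge> 0" for z unfolding \<nu>_eq using b q1 by simp
  have W_nn: "W z \<ge> 0" if "z \<subseteq> E" for z unfolding W_eq[OF that] using b q1 H_nn by simp
  have Zpos: "Z > 0" unfolding Z_def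
    by (rule Zf_pos[OF fin ne]) (use en1 en2 a b in auto)
  have ZW: "(\<Sum>z\<in>Pow E. W z) = Z" unfolding W_def Z_def by (rule sum_Wf[OF E])
  have Z\<nu>pos: "Z\<nu> > 0"
  proof -
    have "\<nu> {} > 0" unfolding \<nu>_eq using b q1 by simp
    also have "\<nu> {} \<le> Z\<nu>" unfolding Z\<nu>_def
      by (rule member_le_sum) (use E \<nu>_nn in auto)
    finally show ?thesis .
  qed
  have holley: "\<nu> x * W y \<le> W (x \<union> y) * \<nu> (x \<inter> y)" if x: "x \<subseteq> E" and y: "y \<subseteq> E" for x y
  proof -
    have xuy: "x \<union> y \<subseteq> E" "x \<inter> y \<subseteq> E" using x y by auto
    have fx: "finite x" "finite y" using E x y by (auto intro: rev_finite_subset)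
    have cx: "card x + card y = card (x \<union> y) + card (x \<inter> y)" using card_Un_Int[OF fx] by simp
    have cE: "card (E - x) + card (E - y) = card (E - (x \<union> y)) + card (E - (x \<inter> y))"
    proof -
      have "card (E - x) + card (E - y) = card ((E - x) \<union> (E - y)) + card ((E - x) \<inter> (E - y))"
        using E by (intro card_Un_Int) auto
      moreover have "(E - x) \<union> (E - y) = E - (x \<inter> y)" "(E - x) \<inter> (E - y) = E - (x \<union> y)" by auto
      ultimately show ?thesis by simp
    qed
    have bpart: "b ^ card (E - x) * b ^ card (E - y) = b ^ card (E - (x \<union> y)) * b ^ card (E - (x \<inter> y))"
      using cE by (simp add: power_add[symmetric])
    have ks: "k x + k y \<le> k (x \<union> y) + k (x \<inter> y)" unfolding k_def
      by (rule n_comps_submod[OF fin(1) en1 E x y])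
    have qpart: "?q ^ k x * ?q ^ k y \<le> ?q ^ k (x \<union> y) * ?q ^ k (x \<inter> y)"
      using power_increasing[OF ks q1] by (simp add: power_add)
    have "card y \<le> card (x \<union> y)" by (rule card_mono) (use fx in auto)
    then have cyz: "card x = card (x \<inter> y) + (card (x \<union> y) - card y)" using cx by simp
    have lpart: "(1 - b) ^ card x * H y \<le> (1 - b) ^ card (x \<inter> y) * H (x \<union> y)"
    proof -
      have "(1 - b) ^ card x * H y = (1 - b) ^ card (x \<inter> y) * ((1 - b) ^ (card (x \<union> y) - card y) * H y)"
        by (subst cyz) (simp add: power_add mult.assoc)
      also have "\<dots> \<le> (1 - b) ^ card (x \<inter> y) * H (x \<union> y)"
        unfolding H_def using b a
        by (intro mult_left_mono Hf_mono[OF E _ xuy(1)]) auto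
      finally show ?thesis .
    qed
    have "\<nu> x * W y = (b ^ card (E - x) * b ^ card (E - y)) * (?q ^ k x * ?q ^ k y) * ((1 - b) ^ card x * H y)"
      unfolding \<nu>_eq W_eq[OF y] by (simp add: algebra_simps)
    also have "\<dots> \<le> (b ^ card (E - (x \<union> y)) * b ^ card (E - (x \<inter> y))) * (?q ^ k (x \<union> y) * ?q ^ k (x \<inter> y)) * ((1 - b) ^ card (x \<inter> y) * H (x \<union> y))"
      unfolding bpart using b q1 H_nn
      by (intro mult_mono qpart lpart mult_left_mono) auto
    also have "\<dots> = W (x \<union> y) * \<nu> (x \<inter> y)"
      unfolding \<nu>_eq W_eq[OF xuy(1)] by (simp add: algebra_simps)
    finally show ?thesis .
  qed
  have ff: "(\<Sum>x\<in>Pow E. (if x \<in> A then \<nu> x else 0)) * (\<Sum>x\<in>Pow E. W x)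
      \<le> (\<Sum>x\<in>Pow E. (if x \<in> A then W x else 0)) * (\<Sum>x\<in>Pow E. \<nu> x)"
  proof (rule four_functions[OF E])
    fix x y assume x: "x \<subseteq> E" and y: "y \<subseteq> E"
    show "(if x \<in> A then \<nu> x else 0) * W y \<le> (if x \<union> y \<in> A then W (x \<union> y) else 0) * \<nu> (x \<inter> y)"
    proof (cases "x \<in> A")
      case True
      then have "x \<union> y \<in> A" using up x y by blast
      then show ?thesis using True holley[OF x y] by simp
    next
      case False
      then show ?thesis using W_nn \<nu>_nn x y by (simp add: mult_nonneg_nonneg)
    qed
  qed (use \<nu>_nn W_nn in auto)
  have r1: "(\<Sum>x\<in>Pow E. (if x \<in> A then f x else 0)) = (\<Sum>x\<in>A. f x)" for f :: "'a set \<Rightarrow> real"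
  proof -
    have "(\<Sum>x\<in>Pow E. (if x \<in> A then f x else 0)) = (\<Sum>x\<in>Pow E \<inter> A. f x)"
      using E by (simp add: sum.inter_restrict)
    also have "Pow E \<inter> A = A" using A by blast
    finally show ?thesis .
  qed
  have main: "(\<Sum>x\<in>A. \<nu> x) * Z \<le> (\<Sum>x\<in>A. W x) * Z\<nu>"
    using ff unfolding r1 ZW Z\<nu>_def .
  have "(\<Sum>x\<in>A. fk V1 E en1 ?q (1 - b) x) = (\<Sum>x\<in>A. \<nu> x) / Z\<nu>"
    unfolding fk_def \<nu>_def Z\<nu>_def by (simp add: sum_divide_distrib)
  also have "\<dots> \<le> (\<Sum>x\<in>A. W x) / Z"
    using main Zpos Z\<nu>pos by (simp add: divide_simps)
  also have "\<dots> = (\<Sum>x\<in>A. Wf E V1 en1 Q1 V2 en2 Q2 a b x / Zf E V1 en1 Q1 V2 en2 Q2 a b)"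
    unfolding W_def Z_def by (simp add: sum_divide_distrib)
  finally show "(\<Sum>x\<in>A. fk V1 E en1 ?q (1 - b) x) \<le> (\<Sum>x\<in>A. Wf E V1 en1 Q1 V2 en2 Q2 a b x / Zf E V1 en1 Q1 V2 en2 Q2 a b)" .
qed

lemma orb_sub:
  assumes "\<forall>x\<in>D. f x \<in> D" "d \<in> D"
  shows "orb f d \<subseteq> D"
proof -
  have "(f ^^ n) d \<in> D" for n by (induction n) (use assms in auto)
  then show ?thesis unfolding orb_def by auto
qed

lemma orb_self: "d \<in> orb f d"
  unfolding orb_def by (metis (mono_tags, lifting) CollectI funpow_0)

lemma cmap_facts:
  assumes "is_cmap D alpha rho"
  shows "finite (cm_verts D rho)" "finite (cm_edges D alpha)" "finite (cm_faces D alpha rho)"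
    "\<forall>e\<in>cm_edges D alpha. cm_ends rho e \<subseteq> cm_verts D rho \<and> cm_ends rho e \<noteq> {}"
    "\<forall>e\<in>cm_edges D alpha. cm_dends alpha rho e \<subseteq> cm_faces D alpha rho \<and> cm_dends alpha rho e \<noteq> {}"
proof -
  have fD: "finite D" using assms unfolding is_cmap_def by blast
  have rD: "\<forall>x\<in>D. rho x \<in> D" using assms unfolding is_cmap_def by (meson bij_betw_apply)
  have aD: "\<forall>x\<in>D. alpha x \<in> D" using assms unfolding is_cmap_def by blast
  have raD: "\<forall>x\<in>D. (rho \<circ> alpha) x \<in> D" using rD aD by simp
  have im: "{g d | d. d \<in> D} = g ` D" for g :: "'a \<Rightarrow> 'a set" by blast
  show "finite (cm_verts D rho)" unfolding cm_verts_def im using fD by simp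
  show "finite (cm_edges D alpha)" unfolding cm_edges_def im using fD by simp
  show "finite (cm_faces D alpha rho)" unfolding cm_faces_def im using fD by simp
  show "\<forall>e\<in>cm_edges D alpha. cm_ends rho e \<subseteq> cm_verts D rho \<and> cm_ends rho e \<noteq> {}"
  proof
    fix e assume "e \<in> cm_edges D alpha"
    then obtain d where d: "d \<in> D" "e = orb alpha d" unfolding cm_edges_def by blast
    have "e \<subseteq> D" using orb_sub[OF aD d(1)] d by simp
    moreover have "d \<in> e" using d orb_self by metis
    ultimately show "cm_ends rho e \<subseteq> cm_verts D rho \<and> cm_ends rho e \<noteq> {}"
      unfolding cm_ends_def cm_verts_def by blast
  qed
  show "\<forall>e\<in>cm_edges D alpha. cm_dends alpha rho e \<subseteq> cm_faces D alpha rho \<and> cm_dends alpha rho e \<noteq> {}"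
  proof
    fix e assume "e \<in> cm_edges D alpha"
    then obtain d where d: "d \<in> D" "e = orb alpha d" unfolding cm_edges_def by blast
    have "e \<subseteq> D" using orb_sub[OF aD d(1)] d by simp
    moreover have "d \<in> e" using d orb_self by metis
    ultimately show "cm_dends alpha rho e \<subseteq> cm_faces D alpha rho \<and> cm_dends alpha rho e \<noteq> {}"
      unfolding cm_dends_def cm_faces_def by blast
  qed
qed

lemma eta_p_eq: "eta_p D alpha rho s = etaG (cm_edges D alpha) (cm_ends rho) s"
  unfolding eta_p_def etaG_def ..

lemma eta_d_eq: "eta_d D alpha rho s = etaG (cm_edges D alpha) (cm_dends alpha rho) s"
  unfolding eta_d_def etaG_def ..

lemma sum_spin_pairs:
  assumes fin: "finite (cm_verts D rho)" "finite Q" "finite (cm_faces D alpha rho)" "finite Q'"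
  shows "(\<Sum>(s, s')\<in>spin_pairs D alpha rho Q Q'. f s s') =
    (\<Sum>s\<in>cm_verts D rho \<rightarrow>\<^sub>E Q. \<Sum>t\<in>cm_faces D alpha rho \<rightarrow>\<^sub>E Q'.
       if eta_p D alpha rho s \<inter> eta_d D alpha rho t = {} then f s t else 0)"
proof -
  let ?A = "(cm_verts D rho \<rightarrow>\<^sub>E Q) \<times> (cm_faces D alpha rho \<rightarrow>\<^sub>E Q')"
  have sp: "spin_pairs D alpha rho Q Q' = {p \<in> ?A. eta_p D alpha rho (fst p) \<inter> eta_d D alpha rho (snd p) = {}}"
    unfolding spin_pairs_def by auto
  have fA: "finite ?A" using fin by (simp add: finite_PiE)
  have "(\<Sum>(s, s')\<in>spin_pairs D alpha rho Q Q'. f s s') =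
     (\<Sum>p\<in>?A. if eta_p D alpha rho (fst p) \<inter> eta_d D alpha rho (snd p) = {} then (case p of (s, s') \<Rightarrow> f s s') else 0)"
    unfolding sp by (rule sum.inter_filter[OF fA])
  also have "\<dots> = (\<Sum>(s, t)\<in>?A. if eta_p D alpha rho s \<inter> eta_d D alpha rho t = {} then f s t else 0)"
    by (rule sum.cong[OF refl]) (simp add: case_prod_beta)
  also have "\<dots> = (\<Sum>s\<in>cm_verts D rho \<rightarrow>\<^sub>E Q. \<Sum>t\<in>cm_faces D alpha rho \<rightarrow>\<^sub>E Q'.
       if eta_p D alpha rho s \<inter> eta_d D alpha rho t = {} then f s t else 0)"
    by (rule sum.cartesian_product[symmetric])
  finally show ?thesis .
qed

lemma ep_sum1: "edge_prob a b X Y e c True + edge_prob a b X Y e c False = mm b X Y e c"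
  unfolding edge_prob_def mm_def by auto

lemma ep_sum2: "X \<inter> Y = {} \<Longrightarrow> edge_prob a b X Y e True c + edge_prob a b X Y e False c = mm a Y X e c"
  unfolding edge_prob_def mm_def by auto

lemma perc_den:
  assumes fin: "finite (cm_verts D rho)" "finite Q" "finite (cm_faces D alpha rho)" "finite Q'"
  shows "(\<Sum>(s, s')\<in>spin_pairs D alpha rho Q Q'. spin_weight D alpha rho a b s s') =
    Zf (cm_edges D alpha) (cm_verts D rho) (cm_ends rho) Q (cm_faces D alpha rho) (cm_dends alpha rho) Q' a b"
  unfolding sum_spin_pairs[OF fin] Zf_def spin_weight_def eta_p_eq eta_d_eq ..

lemma omega_law_eq:
  assumes fin: "finite (cm_verts D rho)" "finite Q" "finite (cm_faces D alpha rho)" "finite Q'"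
    and E: "finite (cm_edges D alpha)"
  shows "omega_law D alpha rho Q Q' a b w =
    Wf (cm_edges D alpha) (cm_verts D rho) (cm_ends rho) Q (cm_faces D alpha rho) (cm_dends alpha rho) Q' a b w /
    Zf (cm_edges D alpha) (cm_verts D rho) (cm_ends rho) Q (cm_faces D alpha rho) (cm_dends alpha rho) Q' a b"
proof -
  let ?E = "cm_edges D alpha"
  let ?X = "\<lambda>s. etaG ?E (cm_ends rho) s" and ?Y = "\<lambda>t. etaG ?E (cm_dends alpha rho) t"
  have "omega_law D alpha rho Q Q' a b w = (\<Sum>w'\<in>Pow ?E. \<Sum>s\<in>cm_verts D rho \<rightarrow>\<^sub>E Q. \<Sum>t\<in>cm_faces D alpha rho \<rightarrow>\<^sub>E Q'.
       if ?X s \<inter> ?Y t = {} then a ^ card (?Y t) * b ^ card (?X s) *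
          (\<Prod>e\<in>?E. edge_prob a b (?X s) (?Y t) e (e \<in> w) (e \<in> w')) else 0) /
     Zf ?E (cm_verts D rho) (cm_ends rho) Q (cm_faces D alpha rho) (cm_dends alpha rho) Q' a b"
    unfolding omega_law_def perc_law_def perc_den[OF fin] sum_divide_distrib[symmetric]
    unfolding sum_spin_pairs[OF fin] spin_weight_def eta_p_eq eta_d_eq ..
  also have "(\<Sum>w'\<in>Pow ?E. \<Sum>s\<in>cm_verts D rho \<rightarrow>\<^sub>E Q. \<Sum>t\<in>cm_faces D alpha rho \<rightarrow>\<^sub>E Q'.
       if ?X s \<inter> ?Y t = {} then a ^ card (?Y t) * b ^ card (?X s) *
          (\<Prod>e\<in>?E. edge_prob a b (?X s) (?Y t) e (e \<in> w) (e \<in> w')) else 0)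
     = (\<Sum>s\<in>cm_verts D rho \<rightarrow>\<^sub>E Q. \<Sum>t\<in>cm_faces D alpha rho \<rightarrow>\<^sub>E Q'. \<Sum>w'\<in>Pow ?E.
       if ?X s \<inter> ?Y t = {} then a ^ card (?Y t) * b ^ card (?X s) *
          (\<Prod>e\<in>?E. edge_prob a b (?X s) (?Y t) e (e \<in> w) (e \<in> w')) else 0)"
    by (subst sum.swap) (simp only: sum.swap[of _ "Pow ?E"])
  also have "\<dots> = Wf ?E (cm_verts D rho) (cm_ends rho) Q (cm_faces D alpha rho) (cm_dends alpha rho) Q' a b w"
    unfolding Wf_def
  proof (intro sum.cong refl)
    fix s t
    have "(\<Sum>w'\<in>Pow ?E. \<Prod>e\<in>?E. edge_prob a b (?X s) (?Y t) e (e \<in> w) (e \<in> w')) = (\<Prod>e\<in>?E. mm b (?X s) (?Y t) e (e \<in> w))"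
      using sum_Pow_prod[OF E, of "\<lambda>e c. edge_prob a b (?X s) (?Y t) e (e \<in> w) c"] by (simp add: ep_sum1)
    then show "(\<Sum>w'\<in>Pow ?E. if ?X s \<inter> ?Y t = {} then a ^ card (?Y t) * b ^ card (?X s) *
          (\<Prod>e\<in>?E. edge_prob a b (?X s) (?Y t) e (e \<in> w) (e \<in> w')) else 0) =
      (if ?X s \<inter> ?Y t = {} then a ^ card (?Y t) * b ^ card (?X s) * (\<Prod>e\<in>?E. mm b (?X s) (?Y t) e (e \<in> w)) else 0)"
      by (simp add: sum_distrib_left[symmetric])
  qed
  finally show ?thesis .
qed

lemma omega'_law_eq:
  assumes fin: "finite (cm_verts D rho)" "finite Q" "finite (cm_faces D alpha rho)" "finite Q'"
    and E: "finite (cm_edges D alpha)"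
  shows "omega'_law D alpha rho Q Q' a b w' =
    Wf (cm_edges D alpha) (cm_faces D alpha rho) (cm_dends alpha rho) Q' (cm_verts D rho) (cm_ends rho) Q b a w' /
    Zf (cm_edges D alpha) (cm_faces D alpha rho) (cm_dends alpha rho) Q' (cm_verts D rho) (cm_ends rho) Q b a"
proof -
  let ?E = "cm_edges D alpha"
  let ?X = "\<lambda>s. etaG ?E (cm_ends rho) s" and ?Y = "\<lambda>t. etaG ?E (cm_dends alpha rho) t"
  have Zeq: "Zf ?E (cm_verts D rho) (cm_ends rho) Q (cm_faces D alpha rho) (cm_dends alpha rho) Q' a b
     = Zf ?E (cm_faces D alpha rho) (cm_dends alpha rho) Q' (cm_verts D rho) (cm_ends rho) Q b a"
    unfolding Zf_def by (rule trans[OF sum.swap], intro sum.cong refl) (simp add: Int_commute mult.commute)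
  have "omega'_law D alpha rho Q Q' a b w' = (\<Sum>w\<in>Pow ?E. \<Sum>s\<in>cm_verts D rho \<rightarrow>\<^sub>E Q. \<Sum>t\<in>cm_faces D alpha rho \<rightarrow>\<^sub>E Q'.
       if ?X s \<inter> ?Y t = {} then a ^ card (?Y t) * b ^ card (?X s) *
          (\<Prod>e\<in>?E. edge_prob a b (?X s) (?Y t) e (e \<in> w) (e \<in> w')) else 0) /
     Zf ?E (cm_verts D rho) (cm_ends rho) Q (cm_faces D alpha rho) (cm_dends alpha rho) Q' a b"
    unfolding omega'_law_def perc_law_def perc_den[OF fin] sum_divide_distrib[symmetric]
    unfolding sum_spin_pairs[OF fin] spin_weight_def eta_p_eq eta_d_eq ..
  also have "(\<Sum>w\<in>Pow ?E. \<Sum>s\<in>cm_verts D rho \<rightarrow>\<^sub>E Q. \<Sum>t\<in>cm_faces D alpha rho \<rightarrow>\<^sub>E Q'.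
       if ?X s \<inter> ?Y t = {} then a ^ card (?Y t) * b ^ card (?X s) *
          (\<Prod>e\<in>?E. edge_prob a b (?X s) (?Y t) e (e \<in> w) (e \<in> w')) else 0)
     = (\<Sum>s\<in>cm_verts D rho \<rightarrow>\<^sub>E Q. \<Sum>t\<in>cm_faces D alpha rho \<rightarrow>\<^sub>E Q'. \<Sum>w\<in>Pow ?E.
       if ?X s \<inter> ?Y t = {} then a ^ card (?Y t) * b ^ card (?X s) *
          (\<Prod>e\<in>?E. edge_prob a b (?X s) (?Y t) e (e \<in> w) (e \<in> w')) else 0)"
    by (subst sum.swap) (simp only: sum.swap[of _ "Pow ?E"])
  also have "\<dots> = (\<Sum>s\<in>cm_verts D rho \<rightarrow>\<^sub>E Q. \<Sum>t\<in>cm_faces D alpha rho \<rightarrow>\<^sub>E Q'.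
       if ?Y t \<inter> ?X s = {} then b ^ card (?X s) * a ^ card (?Y t) * (\<Prod>e\<in>?E. mm a (?Y t) (?X s) e (e \<in> w')) else 0)"
  proof (intro sum.cong refl)
    fix s t
    show "(\<Sum>w\<in>Pow ?E. if ?X s \<inter> ?Y t = {} then a ^ card (?Y t) * b ^ card (?X s) *
          (\<Prod>e\<in>?E. edge_prob a b (?X s) (?Y t) e (e \<in> w) (e \<in> w')) else 0) =
      (if ?Y t \<inter> ?X s = {} then b ^ card (?X s) * a ^ card (?Y t) * (\<Prod>e\<in>?E. mm a (?Y t) (?X s) e (e \<in> w')) else 0)"
    proof (cases "?X s \<inter> ?Y t = {}")
      case True
      have "(\<Sum>w\<in>Pow ?E. \<Prod>e\<in>?E. edge_prob a b (?X s) (?Y t) e (e \<in> w) (e \<in> w')) = (\<Prod>e\<in>?E. mm a (?Y t) (?X s) e (e \<in> w'))"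
        using sum_Pow_prod[OF E, of "\<lambda>e c. edge_prob a b (?X s) (?Y t) e c (e \<in> w')"] by (simp add: ep_sum2[OF True])
      then show ?thesis using True by (simp add: sum_distrib_left[symmetric] Int_commute mult.commute)
    next
      case False
      then show ?thesis by (simp add: Int_commute)
    qed
  qed
  also have "\<dots> = Wf ?E (cm_faces D alpha rho) (cm_dends alpha rho) Q' (cm_verts D rho) (cm_ends rho) Q b a w'"
    unfolding Wf_def by (rule sum.swap)
  finally show ?thesis unfolding Zeq .
qed

theorem lemma6p2:
  fixes D :: "'d set" and alpha rho :: "'d \<Rightarrow> 'd"
    and Q Q' :: "complex set" and q q' :: nat and a b :: real
  assumes "cm_genus0 D alpha rho"
    and "q \<ge> 1" and "q' \<ge> 1"
    and "finite Q" and "finite Q'" and "card Q = q" and "card Q' = q'"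
    and "uminus ` Q = Q" and "uminus ` Q' = Q'"
    and "0 < a" and "a \<le> 1" and "0 < b" and "b \<le> 1"
  shows "stoch_dom (cm_edges D alpha) (omega_law D alpha rho Q Q' a b)
           (fk (cm_verts D rho) (cm_edges D alpha) (cm_ends rho) (real q) (1 - b))
       \<and> stoch_dom (cm_edges D alpha) (omega'_law D alpha rho Q Q' a b)
           (fk (cm_faces D alpha rho) (cm_edges D alpha) (cm_dends alpha rho) (real q') (1 - a))"
proof -
  have cm: "is_cmap D alpha rho" using assms(1) unfolding cm_genus0_def by blast
  note cf = cmap_facts[OF cm]
  have fin: "finite (cm_verts D rho)" "finite Q" "finite (cm_faces D alpha rho)" "finite Q'"
    using cf assms by auto
  have neQ: "Q \<noteq> {}" "Q' \<noteq> {}" using assms(2,3,6,7) by auto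
  have en1: "\<forall>e\<in>cm_edges D alpha. cm_ends rho e \<subseteq> cm_verts D rho" using cf(4) by blast
  have en2: "\<forall>e\<in>cm_edges D alpha. cm_dends alpha rho e \<subseteq> cm_faces D alpha rho" using cf(5) by blast
  have o1: "omega_law D alpha rho Q Q' a b = (\<lambda>w.
    Wf (cm_edges D alpha) (cm_verts D rho) (cm_ends rho) Q (cm_faces D alpha rho) (cm_dends alpha rho) Q' a b w /
    Zf (cm_edges D alpha) (cm_verts D rho) (cm_ends rho) Q (cm_faces D alpha rho) (cm_dends alpha rho) Q' a b)"
    by (rule ext, rule omega_law_eq[OF fin cf(2)])
  have o2: "omega'_law D alpha rho Q Q' a b = (\<lambda>w'.
    Wf (cm_edges D alpha) (cm_faces D alpha rho) (cm_dends alpha rho) Q' (cm_verts D rho) (cm_ends rho) Q b a w' /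
    Zf (cm_edges D alpha) (cm_faces D alpha rho) (cm_dends alpha rho) Q' (cm_verts D rho) (cm_ends rho) Q b a)"
    by (rule ext, rule omega'_law_eq[OF fin cf(2)])
  have s1: "stoch_dom (cm_edges D alpha) (omega_law D alpha rho Q Q' a b)
           (fk (cm_verts D rho) (cm_edges D alpha) (cm_ends rho) (real (card Q)) (1 - b))"
    unfolding o1 by (rule abstract_dom[OF cf(2) fin neQ cf(4) en2]) (use assms in auto)
  have s2: "stoch_dom (cm_edges D alpha) (omega'_law D alpha rho Q Q' a b)
           (fk (cm_faces D alpha rho) (cm_edges D alpha) (cm_dends alpha rho) (real (card Q')) (1 - a))"
    unfolding o2 by (rule abstract_dom[OF cf(2) fin(3,4,1,2) neQ(2,1) cf(5) en1]) (use assms in auto)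
  show ?thesis using s1 s2 assms(6,7) by simp
qed

end
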